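(* Let $G$ be a graph with a valid edge partition and let $C$ be a compatible cycle. Let $f$ be the unique edge of $C$ not in the 2-forest. Removing $f$ from the spanning tree splits it into exactly two trees $t_1$ and $t_2$. Then the number of edges of $C$ with one end in $t_1$ and the other in $t_2$ (counting $f$) is non-zero and even. Moreover, if $f'\neq f$ is any such edge of $C$ and we swap $f$ and $f'$ between the two parts of the edge partition, the result is a valid edge partition with the same associated vertex partition.
   Context: A spanning 2-forest is a spanning forest with exactly two trees (a tree may be a single vertex). A valid edge partition of a graph is a bipartition of its edge set such that one part is the edge set of a spanning tree and the other is the edge set of a spanning 2-forest; its associated vertex partition is given by the vertex sets of the two trees of the 2-forest. A cycle $C$ is compatible with the valid edge partition if all vertices of $C$ lie in the same part of the vertex partition and exactly one edge of $C$ lies in the spanning-tree part. *)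

theory Defs
  imports Main
begin

text \<open>Finite multigraphs: vertex set V, edge set E, and an incidence map
  ends assigning to each edge its set of endpoints (one endpoint for a loop,
  two for an ordinary edge). Parallel edges are allowed.\<close>

definition wf_graph :: "'v set \<Rightarrow> 'e set \<Rightarrow> ('e \<Rightarrow> 'v set) \<Rightarrow> bool" where
  "wf_graph V E ends \<longleftrightarrow> finite V \<and> finite E \<and>
     (\<forall>e\<in>E. ends e \<subseteq> V \<and> (card (ends e) = 1 \<or> card (ends e) = 2))"

definition adj :: "('e \<Rightarrow> 'v set) \<Rightarrow> 'e set \<Rightarrow> 'v \<Rightarrow> 'v \<Rightarrow> bool" where
  "adj ends F u v \<longleftrightarrow> (\<exists>e\<in>F. u \<in> ends e \<and> v \<in> ends e)"

definition connected_on :: "('e \<Rightarrow> 'v set) \<Rightarrow> 'v set \<Rightarrow> 'e set \<Rightarrow> bool" where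
  "connected_on ends W F \<longleftrightarrow> W \<noteq> {} \<and> (\<forall>u\<in>W. \<forall>v\<in>W. (adj ends F)\<^sup>*\<^sup>* u v)"

definition verts_of :: "('e \<Rightarrow> 'v set) \<Rightarrow> 'e set \<Rightarrow> 'v set" where
  "verts_of ends C = \<Union> (ends ` C)"

text \<open>Degree of v in the edge set C (a loop contributes 2).\<close>
definition degree :: "('e \<Rightarrow> 'v set) \<Rightarrow> 'e set \<Rightarrow> 'v \<Rightarrow> nat" where
  "degree ends C v = card {e\<in>C. v \<in> ends e} + card {e\<in>C. ends e = {v}}"

definition is_cycle :: "('e \<Rightarrow> 'v set) \<Rightarrow> 'e set \<Rightarrow> bool" where
  "is_cycle ends C \<longleftrightarrow> C \<noteq> {} \<and> finite C \<and> connected_on ends (verts_of ends C) C \<and>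
     (\<forall>v\<in>verts_of ends C. degree ends C v = 2)"

definition acyclic_edges :: "('e \<Rightarrow> 'v set) \<Rightarrow> 'e set \<Rightarrow> bool" where
  "acyclic_edges ends F \<longleftrightarrow> (\<nexists>C. C \<subseteq> F \<and> is_cycle ends C)"

definition is_tree :: "('e \<Rightarrow> 'v set) \<Rightarrow> 'v set \<Rightarrow> 'e set \<Rightarrow> bool" where
  "is_tree ends W F \<longleftrightarrow> (\<forall>e\<in>F. ends e \<subseteq> W) \<and> connected_on ends W F \<and> acyclic_edges ends F"

definition spanning_tree :: "'v set \<Rightarrow> 'e set \<Rightarrow> ('e \<Rightarrow> 'v set) \<Rightarrow> 'e set \<Rightarrow> bool" where
  "spanning_tree V E ends T \<longleftrightarrow> T \<subseteq> E \<and> is_tree ends V T"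

definition spanning_2forest :: "'v set \<Rightarrow> 'e set \<Rightarrow> ('e \<Rightarrow> 'v set) \<Rightarrow> 'e set \<Rightarrow> 'v set \<Rightarrow> 'v set \<Rightarrow> bool" where
  "spanning_2forest V E ends F V1 V2 \<longleftrightarrow> F \<subseteq> E \<and> V1 \<union> V2 = V \<and> V1 \<inter> V2 = {} \<and>
     (\<forall>e\<in>F. ends e \<subseteq> V1 \<or> ends e \<subseteq> V2) \<and>
     is_tree ends V1 {e\<in>F. ends e \<subseteq> V1} \<and> is_tree ends V2 {e\<in>F. ends e \<subseteq> V2}"

definition valid_edge_partition :: "'v set \<Rightarrow> 'e set \<Rightarrow> ('e \<Rightarrow> 'v set) \<Rightarrow> 'e set \<Rightarrow> 'e set \<Rightarrow> 'v set \<Rightarrow> 'v set \<Rightarrow> bool" where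
  "valid_edge_partition V E ends T F V1 V2 \<longleftrightarrow> T \<union> F = E \<and> T \<inter> F = {} \<and>
     spanning_tree V E ends T \<and> spanning_2forest V E ends F V1 V2"

definition compatible_cycle :: "'e set \<Rightarrow> ('e \<Rightarrow> 'v set) \<Rightarrow> 'e set \<Rightarrow> 'v set \<Rightarrow> 'v set \<Rightarrow> 'e set \<Rightarrow> bool" where
  "compatible_cycle E ends T V1 V2 C \<longleftrightarrow> C \<subseteq> E \<and> is_cycle ends C \<and>
     (verts_of ends C \<subseteq> V1 \<or> verts_of ends C \<subseteq> V2) \<and> card (C \<inter> T) = 1"

definition crossing_edges :: "('e \<Rightarrow> 'v set) \<Rightarrow> 'e set \<Rightarrow> 'v set \<Rightarrow> 'v set \<Rightarrow> 'e set" where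
  "crossing_edges ends C U1 U2 = {e\<in>C. ends e \<inter> U1 \<noteq> {} \<and> ends e \<inter> U2 \<noteq> {}}"

end

theory Submission
  imports Defs
begin


lemma adj_sym: "adj ends G u v = adj ends G v u"
  unfolding adj_def by auto

lemma reach_sym: assumes "(adj ends G)\<^sup>*\<^sup>* u v" shows "(adj ends G)\<^sup>*\<^sup>* v u"
  using assms
proof (induction rule: rtranclp_induct)
  case (step y z)
  have "adj ends G z y" using step(2) by (simp add: adj_sym)
  thus ?case using step(3) by (rule converse_rtranclp_into_rtranclp)
qed simp

lemma reach_mono: assumes "G \<subseteq> H" "(adj ends G)\<^sup>*\<^sup>* u v" shows "(adj ends H)\<^sup>*\<^sup>* u v"
  using assms(2)
proof (induction rule: rtranclp_induct)
  case (step y z)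
  have "adj ends H y z" using step(2) assms(1) by (auto simp: adj_def)
  thus ?case using step(3) by (meson rtranclp.rtrancl_into_rtrancl)
qed simp

lemma reach_closed:
  assumes "a \<in> S" "\<forall>g\<in>G. ends g \<inter> S \<noteq> {} \<longrightarrow> ends g \<subseteq> S" "(adj ends G)\<^sup>*\<^sup>* a x"
  shows "x \<in> S \<and> (adj ends {g\<in>G. ends g \<subseteq> S})\<^sup>*\<^sup>* a x"
  using assms(3)
proof (induction rule: rtranclp_induct)
  case base thus ?case using assms(1) by simp
next
  case (step y z)
  then obtain g where g: "g\<in>G" "y \<in> ends g" "z \<in> ends g" by (auto simp: adj_def)
  with step assms(2) have sub: "ends g \<subseteq> S" by blast
  hence "adj ends {g\<in>G. ends g \<subseteq> S} y z" using g by (auto simp: adj_def)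
  thus ?case using step sub g by (auto intro: rtranclp.rtrancl_into_rtrancl)
qed

lemma reach_set_closed:
  "\<forall>g\<in>G. ends g \<inter> {x. (adj ends G)\<^sup>*\<^sup>* a x} \<noteq> {} \<longrightarrow> ends g \<subseteq> {x. (adj ends G)\<^sup>*\<^sup>* a x}"
proof (intro ballI impI subsetI)
  fix g w assume g: "g \<in> G" "ends g \<inter> {x. (adj ends G)\<^sup>*\<^sup>* a x} \<noteq> {}" "w \<in> ends g"
  then obtain u where u: "u \<in> ends g" "(adj ends G)\<^sup>*\<^sup>* a u" by auto
  have "adj ends G u w" using g u by (auto simp: adj_def)
  thus "w \<in> {x. (adj ends G)\<^sup>*\<^sup>* a x}" using u by (auto intro: rtranclp.rtrancl_into_rtrancl)
qed

lemma card1E: assumes "card A = 1" shows "\<exists>x. A = {x}"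
proof -
  have "card A = Suc 0" using assms by simp
  thus ?thesis by (rule card_1_singleton_iff[THEN iffD1])
qed

lemma loop_cycle:
  assumes "card (ends e) = 1"
  shows "is_cycle ends {e}"
proof -
  obtain v where v: "ends e = {v}" using card1E[OF assms] by blast
  have vs: "verts_of ends {e} = {v}" using v by (simp add: verts_of_def)
  have s1: "{g\<in>{e}. v \<in> ends g} = {e}" using v by auto
  have s2: "{g\<in>{e}. ends g = {v}} = {e}" using v by auto
  have d: "degree ends {e} v = 2" unfolding degree_def s1 s2 by simp
  have c: "connected_on ends {v} {e}" unfolding connected_on_def by simp
  show ?thesis unfolding is_cycle_def vs using d c by simp
qed

lemma acyclic_card2:
  assumes "acyclic_edges ends F" "g \<in> F" "card (ends g) = 1 \<or> card (ends g) = 2"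
  shows "\<exists>a b. ends g = {a,b} \<and> a \<noteq> b"
proof -
  have "card (ends g) \<noteq> 1"
  proof
    assume "card (ends g) = 1"
    hence "is_cycle ends {g}" by (rule loop_cycle)
    moreover have "{g} \<subseteq> F" using assms(2) by simp
    ultimately show False using assms(1) unfolding acyclic_edges_def by blast
  qed
  hence "card (ends g) = 2" using assms(3) by blast
  thus ?thesis using card_2_iff[THEN iffD1] by blast
qed

lemma even_sum_card:
  "finite D \<Longrightarrow> even (sum (t::'a \<Rightarrow> nat) D) = even (card {e\<in>D. odd (t e)})"
proof (induction rule: finite_induct)
  case empty thus ?case by simp
next
  case (insert x F)
  have fin: "finite {e\<in>F. odd (t e)}" using insert(1) by simp
  have nx: "x \<notin> {e\<in>F. odd (t e)}" using insert(2) by simp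
  show ?case
  proof (cases "odd (t x)")
    case True
    have eq: "{e\<in>insert x F. odd (t e)} = insert x {e\<in>F. odd (t e)}" using True by auto
    show ?thesis unfolding eq sum.insert[OF insert(1,2)] card.insert_remove[OF fin]
      using nx insert(3) True by simp
  next
    case False
    have eq: "{e\<in>insert x F. odd (t e)} = {e\<in>F. odd (t e)}" using False by auto
    show ?thesis unfolding eq sum.insert[OF insert(1,2)]
      using insert(3) False by simp
  qed
qed

lemma parity:
  assumes fin: "finite D" and wf: "\<forall>e\<in>D. card (ends e) = 1 \<or> card (ends e) = 2"
    and ev: "\<forall>v\<in>S \<inter> verts_of ends D. even (degree ends D v)"
  shows "even (card {e\<in>D. ends e \<inter> S \<noteq> {} \<and> \<not> ends e \<subseteq> S})"
proof -
  define W where "W = S \<inter> verts_of ends D"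
  have finE: "\<forall>e\<in>D. finite (ends e)" using wf by (metis card.infinite zero_neq_numeral zero_neq_one)
  have finW: "finite W" unfolding W_def verts_of_def using fin finE by auto
  define t where "t e = card (ends e \<inter> S) + (if \<exists>v\<in>S. ends e = {v} then 1 else 0)" for e
  have c1: "card {e\<in>D. v\<in>ends e} = (\<Sum>e\<in>D. if v \<in> ends e then 1 else 0)" for v
    by (simp add: sum.inter_filter[OF fin, symmetric])
  have c2: "card {e\<in>D. ends e = {v}} = (\<Sum>e\<in>D. if ends e = {v} then 1 else 0)" for v
    by (simp add: sum.inter_filter[OF fin, symmetric])
  have s1: "(\<Sum>v\<in>W. card {e\<in>D. v\<in>ends e}) = (\<Sum>e\<in>D. card (ends e \<inter> S))"
  proof -
    have "(\<Sum>v\<in>W. card {e\<in>D. v\<in>ends e}) = (\<Sum>v\<in>W. \<Sum>e\<in>D. if v \<in> ends e then 1 else 0)"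
      by (simp add: c1)
    also have "\<dots> = (\<Sum>e\<in>D. \<Sum>v\<in>W. if v \<in> ends e then 1 else 0)" by (rule sum.swap)
    also have "\<dots> = (\<Sum>e\<in>D. card {v\<in>W. v \<in> ends e})"
      by (simp add: sum.inter_filter[OF finW, symmetric])
    also have "\<dots> = (\<Sum>e\<in>D. card (ends e \<inter> S))"
    proof (rule sum.cong)
      fix e assume "e \<in> D"
      hence "{v\<in>W. v \<in> ends e} = ends e \<inter> S" unfolding W_def verts_of_def by auto
      thus "card {v\<in>W. v \<in> ends e} = card (ends e \<inter> S)" by simp
    qed simp
    finally show ?thesis .
  qed
  have s2: "(\<Sum>v\<in>W. card {e\<in>D. ends e = {v}}) = (\<Sum>e\<in>D. if \<exists>v\<in>S. ends e = {v} then 1 else 0)"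
  proof -
    have "(\<Sum>v\<in>W. card {e\<in>D. ends e = {v}}) = (\<Sum>v\<in>W. \<Sum>e\<in>D. if ends e = {v} then 1 else 0)"
      by (simp add: c2)
    also have "\<dots> = (\<Sum>e\<in>D. \<Sum>v\<in>W. if ends e = {v} then 1 else 0)" by (rule sum.swap)
    also have "\<dots> = (\<Sum>e\<in>D. card {v\<in>W. ends e = {v}})"
      by (simp add: sum.inter_filter[OF finW, symmetric])
    also have "\<dots> = (\<Sum>e\<in>D. if \<exists>v\<in>S. ends e = {v} then 1 else 0)"
    proof (rule sum.cong)
      fix e assume e: "e \<in> D"
      show "card {v\<in>W. ends e = {v}} = (if \<exists>v\<in>S. ends e = {v} then 1 else 0)"
      proof (cases "\<exists>v\<in>S. ends e = {v}")
        case True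
        then obtain v where v: "v \<in> S" "ends e = {v}" by blast
        hence "{v\<in>W. ends e = {v}} = {v}" using e unfolding W_def verts_of_def by auto
        thus ?thesis using True by simp
      next
        case False
        have em: "{v\<in>W. ends e = {v}} = {}" using False unfolding W_def by auto
        show ?thesis unfolding em using False by simp
      qed
    qed simp
    finally show ?thesis .
  qed
  have sumeq: "(\<Sum>v\<in>W. degree ends D v) = sum t D"
    unfolding degree_def t_def sum.distrib s1 s2 by simp
  have "even (\<Sum>v\<in>W. degree ends D v)" using ev unfolding W_def by (auto intro: dvd_sum)
  hence "even (card {e\<in>D. odd (t e)})" using sumeq even_sum_card[OF fin, of t] by simp
  moreover have "{e\<in>D. odd (t e)} = {e\<in>D. ends e \<inter> S \<noteq> {} \<and> \<not> ends e \<subseteq> S}"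
  proof -
    have "odd (t e) = (ends e \<inter> S \<noteq> {} \<and> \<not> ends e \<subseteq> S)" if e: "e \<in> D" for e
    proof -
      have "card (ends e) = 1 \<or> card (ends e) = 2" using wf e by blast
      thus ?thesis
      proof
        assume "card (ends e) = 1"
        then obtain v where v: "ends e = {v}" using card1E by blast
        thus ?thesis unfolding t_def by (cases "v \<in> S") auto
      next
        assume "card (ends e) = 2"
        then obtain x y where xy: "ends e = {x,y}" "x \<noteq> y" using card_2_iff[THEN iffD1] by blast
        have nl: "\<not> (\<exists>v\<in>S. ends e = {v})"
        proof
          assume "\<exists>v\<in>S. ends e = {v}"
          then obtain v where "{x,y} = {v}" using xy by auto
          hence "x = v" "y = v" by (blast, blast)
          thus False using xy by simp
        qed
        show ?thesis unfolding t_def using nl xy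
          by (cases "x \<in> S"; cases "y \<in> S") (auto simp: Int_insert_left)
      qed
    qed
    thus ?thesis by auto
  qed
  ultimately show ?thesis by simp
qed



lemma dbl_single: "{a,b} = {c} \<Longrightarrow> a = c \<and> b = c"
  by blast

lemma cyc:
  assumes m2: "2 \<le> m" and iv: "inj_on v {..<m}" and ih: "inj_on h {..<m}"
    and he: "\<forall>i<m. ends (h i) = {v i, v (Suc i mod m)}"
  shows "is_cycle ends (h ` {..<m})"
proof -
  define s where "s i = (if Suc i = m then 0 else Suc i)" for i
  have smod: "Suc i mod m = s i" if "i < m" for i
    using that unfolding s_def by auto
  have slt: "s i < m" if "i < m" for i using that m2 unfolding s_def by auto
  have he': "ends (h i) = {v i, v (s i)}" if "i < m" for i using he that smod by simp
  let ?D = "h ` {..<m}"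
  have verts: "verts_of ends ?D = v ` {..<m}"
  proof
    show "verts_of ends ?D \<subseteq> v ` {..<m}"
      unfolding verts_of_def using he' slt by auto
    show "v ` {..<m} \<subseteq> verts_of ends ?D"
    proof
      fix x assume "x \<in> v ` {..<m}"
      then obtain j where j: "j < m" "x = v j" by auto
      thus "x \<in> verts_of ends ?D" unfolding verts_of_def using he'[OF j(1)] by auto
    qed
  qed
  have reach0: "(adj ends ?D)\<^sup>*\<^sup>* (v 0) (v i)" if "i < m" for i
    using that
  proof (induction i)
    case 0 thus ?case by simp
  next
    case (Suc i)
    hence im: "i < m" by simp
    have "s i = Suc i" using Suc.prems unfolding s_def by auto
    hence "adj ends ?D (v i) (v (Suc i))" using he'[OF im] im unfolding adj_def by force
    thus ?case using Suc.IH[OF im] by (meson rtranclp.rtrancl_into_rtrancl)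
  qed
  have conn: "connected_on ends (verts_of ends ?D) ?D"
    unfolding connected_on_def verts
  proof (intro conjI ballI)
    have "v 0 \<in> v ` {..<m}" using m2 by auto
    thus "v ` {..<m} \<noteq> {}" by blast
    fix x y assume "x \<in> v ` {..<m}" "y \<in> v ` {..<m}"
    then obtain i j where "i<m" "j<m" "x = v i" "y = v j" by auto
    thus "(adj ends ?D)\<^sup>*\<^sup>* x y" using reach0 reach_sym by (metis rtranclp_trans)
  qed
  have deg: "degree ends ?D (v j) = 2" if j: "j < m" for j
  proof -
    define k where "k = (if j = 0 then m - 1 else j - 1)"
    have k: "k < m" "s k = j" "k \<noteq> j" using j m2 unfolding k_def s_def by auto
    have "{g\<in>?D. v j \<in> ends g} = {h j, h k}"
    proof
      show "{g\<in>?D. v j \<in> ends g} \<subseteq> {h j, h k}"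
      proof
        fix g assume "g \<in> {g\<in>?D. v j \<in> ends g}"
        then obtain i where i: "i < m" "g = h i" "v j \<in> ends (h i)" by auto
        hence "v j = v i \<or> v j = v (s i)" using he' by auto
        hence "j = i \<or> j = s i" using iv i(1) j slt[OF i(1)] by (auto dest: inj_onD)
        moreover have "j = s i \<Longrightarrow> i = k" using i(1) j m2 unfolding s_def k_def by auto
        ultimately show "g \<in> {h j, h k}" using i by auto
      qed
      show "{h j, h k} \<subseteq> {g\<in>?D. v j \<in> ends g}"
        using he'[OF j] he'[OF k(1)] k j by auto
    qed
    moreover have "h j \<noteq> h k" using ih j k by (auto dest: inj_onD)
    moreover have "{g\<in>?D. ends g = {v j}} = {}"
    proof -
      have "ends (h i) \<noteq> {v j}" if "i < m" for i
      proof
        assume "ends (h i) = {v j}"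
        hence "{v i, v (s i)} = {v j}" using he'[OF that] by simp
        hence "v i = v (s i)" using dbl_single by metis
        hence "i = s i" using iv that slt[OF that] by (auto dest: inj_onD)
        thus False using that m2 unfolding s_def by (auto split: if_splits)
      qed
      thus ?thesis by auto
    qed
    ultimately show ?thesis unfolding degree_def by simp
  qed
  have ne: "?D \<noteq> {}" using m2 by (metis image_is_empty lessThan_empty_iff not_numeral_le_zero)
  show ?thesis unfolding is_cycle_def
  proof (intro conjI ne finite_imageI finite_lessThan conn ballI)
    fix x assume "x \<in> verts_of ends ?D"
    then obtain j where "j < m" "x = v j" using verts by auto
    thus "degree ends ?D x = 2" using deg by simp
  qed
qed



inductive dpath :: "('e \<Rightarrow> 'v set) \<Rightarrow> 'e set \<Rightarrow> 'v list \<Rightarrow> 'e list \<Rightarrow> bool"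
  for ends G where
  dp1: "dpath ends G [v] []"
| dp2: "dpath ends G (w#vs) es \<Longrightarrow> e \<in> G \<Longrightarrow> ends e = {v,w} \<Longrightarrow> v \<notin> set (w#vs)
          \<Longrightarrow> dpath ends G (v#w#vs) (e#es)"

lemma dpath_props:
  "dpath ends G vs es \<Longrightarrow> distinct vs \<and> length vs = Suc (length es) \<and> set es \<subseteq> G
     \<and> (\<forall>i<length es. ends (es!i) = {vs!i, vs!Suc i})"
proof (induction rule: dpath.induct)
  case (dp1 v) thus ?case by simp
next
  case (dp2 w vs es e v)
  have "\<forall>i<length (e#es). ends ((e#es)!i) = {(v#w#vs)!i, (v#w#vs)!Suc i}"
  proof (intro allI impI)
    fix i assume i: "i < length (e#es)"
    show "ends ((e#es)!i) = {(v#w#vs)!i, (v#w#vs)!Suc i}"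
    proof (cases i)
      case 0 thus ?thesis using dp2 by simp
    next
      case (Suc j) thus ?thesis using dp2 i by simp
    qed
  qed
  thus ?case using dp2 by simp
qed

lemma dpath_drop:
  "dpath ends G vs es \<Longrightarrow> k < length vs \<Longrightarrow> dpath ends G (drop k vs) (drop k es)"
proof (induction arbitrary: k rule: dpath.induct)
  case (dp1 v) thus ?case by (simp add: dpath.dp1)
next
  case (dp2 w vs es e v)
  show ?case
  proof (cases k)
    case 0 thus ?thesis using dp2 by (simp add: dpath.dp2)
  next
    case (Suc k') thus ?thesis using dp2 by simp
  qed
qed

lemma dpath_exists:
  assumes wf: "\<forall>g\<in>G. card (ends g) = 1 \<or> card (ends g) = 2"
    and r: "(adj ends G)\<^sup>*\<^sup>* a b"
  shows "\<exists>vs es. dpath ends G vs es \<and> hd vs = a \<and> last vs = b"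
  using r
proof (induction rule: converse_rtranclp_induct)
  case base
  have "dpath ends G [b] []" by (rule dpath.dp1)
  thus ?case by force
next
  case (step a y)
  then obtain vs es where p: "dpath ends G vs es" "hd vs = y" "last vs = b" by blast
  have len: "length vs = Suc (length es)" using dpath_props[OF p(1)] by simp
  then obtain rest where vs: "vs = y # rest" using p(2) by (cases vs) auto
  show ?case
  proof (cases "a \<in> set vs")
    case True
    then obtain k where k: "k < length vs" "vs!k = a" by (auto simp: in_set_conv_nth)
    have "dpath ends G (drop k vs) (drop k es)" using dpath_drop[OF p(1) k(1)] .
    moreover have "hd (drop k vs) = a" using k by (simp add: hd_drop_conv_nth)
    moreover have "last (drop k vs) = b" using k p(3) by simp
    ultimately show ?thesis by blast
  next
    case False
    obtain g where g: "g \<in> G" "a \<in> ends g" "y \<in> ends g" using step(1) by (auto simp: adj_def)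
    have ay: "a \<noteq> y" using False vs by auto
    have fin: "finite (ends g)" using wf g(1) by (metis card.infinite zero_neq_numeral zero_neq_one)
    have sub: "{a,y} \<subseteq> ends g" using g by auto
    have c2: "card {a,y} = 2" using ay by simp
    have "card (ends g) \<le> 2" using wf g(1) by auto
    hence eq: "ends g = {a,y}" using card_subset_eq[OF fin sub] c2 card_mono[OF fin sub] by simp
    have "dpath ends G (a#y#rest) (g#es)"
      using dpath.dp2[of ends G y rest es g a] p(1) vs g(1) eq False by simp
    moreover have "last (a#y#rest) = b" using p(3) vs by simp
    ultimately show ?thesis by force
  qed
qed

lemma cycle_lemma:
  assumes acyc: "acyclic_edges ends F" and wf: "\<forall>g\<in>F. card (ends g) = 1 \<or> card (ends g) = 2"
    and e0: "e0 \<in> F" "ends e0 = {a,b}" "a \<noteq> b"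
  shows "\<not> (adj ends (F - {e0}))\<^sup>*\<^sup>* a b"
proof
  assume r: "(adj ends (F - {e0}))\<^sup>*\<^sup>* a b"
  have wf': "\<forall>g\<in>F - {e0}. card (ends g) = 1 \<or> card (ends g) = 2" using wf by blast
  obtain vs es where p: "dpath ends (F - {e0}) vs es" "hd vs = a" "last vs = b"
    using dpath_exists[OF wf' r] by blast
  note pp = dpath_props[OF p(1)]
  define n where "n = length es"
  define m where "m = length vs"
  have mn: "m = Suc n" using pp unfolding m_def n_def by simp
  have n1: "n \<ge> 1"
  proof (rule ccontr)
    assume "\<not> n \<ge> 1"
    hence "length vs = 1" using mn m_def by simp
    then obtain x where "vs = [x]" by (cases vs) auto
    thus False using p e0(3) by simp
  qed
  define v where "v i = vs ! i" for i
  define h where "h i = (if i < n then es ! i else e0)" for i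
  have m2: "2 \<le> m" using mn n1 by simp
  have iv: "inj_on v {..<m}"
    unfolding v_def m_def using pp by (simp add: inj_on_nth)
  have vne: "vs \<noteq> []" using mn m_def by auto
  have va: "v 0 = a" using p(2) hd_conv_nth[OF vne] unfolding v_def by simp
  have vb: "v n = b" using p(3) mn unfolding v_def m_def n_def
    by (metis diff_Suc_1 last_conv_nth list.size(3) nat.distinct(1))
  have he: "\<forall>i<m. ends (h i) = {v i, v (Suc i mod m)}"
  proof (intro allI impI)
    fix i assume i: "i < m"
    show "ends (h i) = {v i, v (Suc i mod m)}"
    proof (cases "i < n")
      case True
      hence "Suc i mod m = Suc i" using mn by simp
      thus ?thesis using pp True unfolding h_def v_def n_def by simp
    next
      case False
      hence "i = n" using i mn by simp
      hence "Suc i mod m = 0" using mn by simp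
      thus ?thesis using \<open>i = n\<close> e0(2) va vb unfolding h_def by auto
    qed
  qed
  have esF: "es ! i \<in> F - {e0}" if "i < n" for i
  proof -
    have "es ! i \<in> set es" using that unfolding n_def by simp
    thus ?thesis using pp by blast
  qed
  have ih: "inj_on h {..<m}"
  proof (rule inj_onI)
    fix i j assume i: "i \<in> {..<m}" and j: "j \<in> {..<m}" and eq: "h i = h j"
    show "i = j"
    proof (cases "i < n"; cases "j < n")
      assume a1: "i < n" and a2: "j < n"
      hence "es!i = es!j" using eq unfolding h_def by simp
      hence "{vs!i, vs!Suc i} = {vs!j, vs!Suc j}" using pp a1 a2 unfolding n_def by metis
      moreover have "Suc i < length vs" "Suc j < length vs" using a1 a2 mn m_def by auto
      ultimately show "i = j" using pp
        by (auto simp: doubleton_eq_iff nth_eq_iff_index_eq)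
    next
      assume "i < n" "\<not> j < n"
      thus "i = j" using eq esF unfolding h_def by auto
    next
      assume "\<not> i < n" "j < n"
      thus "i = j" using eq esF unfolding h_def by (metis DiffD2 singletonI)
    next
      assume "\<not> i < n" "\<not> j < n"
      thus "i = j" using i j mn by simp
    qed
  qed
  have sub: "h ` {..<m} \<subseteq> F" using esF e0(1) unfolding h_def by auto
  have "is_cycle ends (h ` {..<m})" using cyc[OF m2 iv ih he] .
  thus False using acyc sub unfolding acyclic_edges_def by blast
qed

lemma cycle_connected:
  assumes cyc: "is_cycle ends D" and wf: "\<forall>g\<in>D. card (ends g) = 1 \<or> card (ends g) = 2"
    and e: "e \<in> D" "p \<in> ends e" "q \<in> ends e"
  shows "(adj ends (D - {e}))\<^sup>*\<^sup>* p q"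
proof (rule ccontr)
  assume nq: "\<not> (adj ends (D - {e}))\<^sup>*\<^sup>* p q"
  define S where "S = {x. (adj ends (D - {e}))\<^sup>*\<^sup>* p x}"
  have cl: "\<forall>g\<in>D - {e}. ends g \<inter> S \<noteq> {} \<longrightarrow> ends g \<subseteq> S"
    unfolding S_def by (rule reach_set_closed)
  have fin: "finite D" using cyc unfolding is_cycle_def by simp
  have ev: "\<forall>v\<in>S \<inter> verts_of ends D. even (degree ends D v)"
    using cyc unfolding is_cycle_def by simp
  have "{g\<in>D. ends g \<inter> S \<noteq> {} \<and> \<not> ends g \<subseteq> S} = {e}"
  proof
    show "{g\<in>D. ends g \<inter> S \<noteq> {} \<and> \<not> ends g \<subseteq> S} \<subseteq> {e}" using cl by blast
    have "p \<in> S" unfolding S_def by simp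
    moreover have "q \<notin> S" using nq unfolding S_def by simp
    ultimately show "{e} \<subseteq> {g\<in>D. ends g \<inter> S \<noteq> {} \<and> \<not> ends g \<subseteq> S}" using e by blast
  qed
  thus False using parity[OF fin wf ev] by simp
qed



lemma acyclic_subset: "acyclic_edges ends F \<Longrightarrow> G \<subseteq> F \<Longrightarrow> acyclic_edges ends G"
  unfolding acyclic_edges_def by blast

lemma comp_connected:
  "connected_on ends {x. (adj ends H)\<^sup>*\<^sup>* a x} {g\<in>H. ends g \<subseteq> {x. (adj ends H)\<^sup>*\<^sup>* a x}}"
proof -
  define S where "S = {x. (adj ends H)\<^sup>*\<^sup>* a x}"
  have aS: "a \<in> S" unfolding S_def by simp
  have cl: "\<forall>g\<in>H. ends g \<inter> S \<noteq> {} \<longrightarrow> ends g \<subseteq> S" unfolding S_def by (rule reach_set_closed)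
  have r: "(adj ends {g\<in>H. ends g \<subseteq> S})\<^sup>*\<^sup>* a x" if "x \<in> S" for x
  proof -
    have "(adj ends H)\<^sup>*\<^sup>* a x" using that unfolding S_def by simp
    thus ?thesis using reach_closed[OF aS cl, of x] by blast
  qed
  have "connected_on ends S {g\<in>H. ends g \<subseteq> S}"
    unfolding connected_on_def
  proof (intro conjI ballI)
    show "S \<noteq> {}" using aS by blast
    fix x y assume xy: "x \<in> S" "y \<in> S"
    have "(adj ends {g\<in>H. ends g \<subseteq> S})\<^sup>*\<^sup>* x a" using r[OF xy(1)] by (rule reach_sym)
    moreover have "(adj ends {g\<in>H. ends g \<subseteq> S})\<^sup>*\<^sup>* a y" using r[OF xy(2)] .
    ultimately show "(adj ends {g\<in>H. ends g \<subseteq> S})\<^sup>*\<^sup>* x y" by (rule rtranclp_trans)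
  qed
  thus ?thesis unfolding S_def .
qed

lemma split_tree:
  assumes conn: "connected_on ends W G" and inW: "\<forall>g\<in>G. ends g \<subseteq> W"
    and e: "e \<in> G" "ends e = {a,b}" and nr: "\<not> (adj ends (G - {e}))\<^sup>*\<^sup>* a b"
  shows "\<exists>A B. A \<union> B = W \<and> A \<inter> B = {} \<and> (\<forall>g\<in>G - {e}. ends g \<subseteq> A \<or> ends g \<subseteq> B)
       \<and> connected_on ends A {g\<in>G - {e}. ends g \<subseteq> A} \<and> connected_on ends B {g\<in>G - {e}. ends g \<subseteq> B}
       \<and> a \<in> A \<and> b \<in> B"
proof -
  define H where "H = G - {e}"
  define A where "A = {x. (adj ends H)\<^sup>*\<^sup>* a x}"
  define B where "B = {x. (adj ends H)\<^sup>*\<^sup>* b x}"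
  have aW: "a \<in> W" and bW: "b \<in> W" using inW e by auto
  have clA: "\<forall>g\<in>H. ends g \<inter> A \<noteq> {} \<longrightarrow> ends g \<subseteq> A" unfolding A_def by (rule reach_set_closed)
  have clB: "\<forall>g\<in>H. ends g \<inter> B \<noteq> {} \<longrightarrow> ends g \<subseteq> B" unfolding B_def by (rule reach_set_closed)
  have clW: "\<forall>g\<in>H. ends g \<inter> W \<noteq> {} \<longrightarrow> ends g \<subseteq> W" using inW unfolding H_def by blast
  have AW: "A \<subseteq> W" using reach_closed[OF aW clW] unfolding A_def by blast
  have BW: "B \<subseteq> W" using reach_closed[OF bW clW] unfolding B_def by blast
  have WAB: "y \<in> A \<union> B" if "(adj ends G)\<^sup>*\<^sup>* a y" for y
    using that
  proof (induction rule: rtranclp_induct)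
    case base thus ?case unfolding A_def by simp
  next
    case (step y z)
    then obtain g where g: "g \<in> G" "y \<in> ends g" "z \<in> ends g" by (auto simp: adj_def)
    show ?case
    proof (cases "g = e")
      case True
      hence "z = a \<or> z = b" using g e by auto
      thus ?thesis unfolding A_def B_def by auto
    next
      case False
      hence adjH: "adj ends H y z" using g unfolding H_def adj_def by auto
      from step(3) show ?thesis
      proof
        assume "y \<in> A" thus ?thesis using adjH unfolding A_def by (auto intro: rtranclp.rtrancl_into_rtrancl)
      next
        assume "y \<in> B" thus ?thesis using adjH unfolding B_def by (auto intro: rtranclp.rtrancl_into_rtrancl)
      qed
    qed
  qed
  have U: "A \<union> B = W"
  proof
    show "A \<union> B \<subseteq> W" using AW BW by blast
    show "W \<subseteq> A \<union> B" using WAB conn aW unfolding connected_on_def by blast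
  qed
  have I: "A \<inter> B = {}"
  proof (rule ccontr)
    assume "A \<inter> B \<noteq> {}"
    then obtain x where "(adj ends H)\<^sup>*\<^sup>* a x" "(adj ends H)\<^sup>*\<^sup>* b x" unfolding A_def B_def by blast
    hence "(adj ends H)\<^sup>*\<^sup>* x b" using reach_sym by metis
    hence "(adj ends H)\<^sup>*\<^sup>* a b" using \<open>(adj ends H)\<^sup>*\<^sup>* a x\<close> by (rule rtranclp_trans[rotated])
    thus False using nr unfolding H_def by simp
  qed
  have P: "\<forall>g\<in>H. ends g \<subseteq> A \<or> ends g \<subseteq> B"
  proof
    fix g assume g: "g \<in> H"
    show "ends g \<subseteq> A \<or> ends g \<subseteq> B"
    proof (cases "ends g = {}")
      case True thus ?thesis by simp
    next
      case False
      then obtain u where u: "u \<in> ends g" by blast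
      hence "u \<in> A \<union> B" using g inW U unfolding H_def by blast
      thus ?thesis using clA clB g u by blast
    qed
  qed
  have cA: "connected_on ends A {g\<in>H. ends g \<subseteq> A}" unfolding A_def by (rule comp_connected)
  have cB: "connected_on ends B {g\<in>H. ends g \<subseteq> B}" unfolding B_def by (rule comp_connected)
  have "a \<in> A" "b \<in> B" unfolding A_def B_def by simp_all
  thus ?thesis using U I P cA cB unfolding H_def by blast
qed

lemma insert_acyclic:
  assumes acyc: "acyclic_edges ends G" and wf: "\<forall>g\<in>insert h G. card (ends g) = 1 \<or> card (ends g) = 2"
   and cl: "\<forall>g\<in>G. ends g \<inter> A \<noteq> {} \<longrightarrow> ends g \<subseteq> A"
   and p: "p \<in> ends h" "p \<in> A" and q: "q \<in> ends h" "q \<notin> A"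
  shows "acyclic_edges ends (insert h G)"
  unfolding acyclic_edges_def
proof
  assume "\<exists>D. D \<subseteq> insert h G \<and> is_cycle ends D"
  then obtain D where D: "D \<subseteq> insert h G" "is_cycle ends D" by blast
  show False
  proof (cases "h \<in> D")
    case False
    hence "D \<subseteq> G" using D by blast
    thus False using acyc D unfolding acyclic_edges_def by blast
  next
    case True
    have wfD: "\<forall>g\<in>D. card (ends g) = 1 \<or> card (ends g) = 2" using wf D by blast
    have "(adj ends (D - {h}))\<^sup>*\<^sup>* p q" using cycle_connected[OF D(2) wfD True p(1) q(1)] .
    moreover have "D - {h} \<subseteq> G" using D by blast
    ultimately have "(adj ends G)\<^sup>*\<^sup>* p q" by (rule reach_mono[rotated])
    hence "q \<in> A" using reach_closed[OF p(2) cl] by blast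
    thus False using q by simp
  qed
qed

lemma tree_join:
  assumes AB: "A \<inter> B = {}" and part: "\<forall>g\<in>G. ends g \<subseteq> A \<or> ends g \<subseteq> B"
    and cA: "connected_on ends A {g\<in>G. ends g \<subseteq> A}" and cB: "connected_on ends B {g\<in>G. ends g \<subseteq> B}"
    and acyc: "acyclic_edges ends G" and wf: "\<forall>g\<in>insert h G. card (ends g) = 1 \<or> card (ends g) = 2"
    and hW: "ends h \<subseteq> A \<union> B" and p: "p \<in> ends h" "p \<in> A" and q: "q \<in> ends h" "q \<in> B"
  shows "is_tree ends (A \<union> B) (insert h G)"
proof -
  have edges: "\<forall>g\<in>insert h G. ends g \<subseteq> A \<union> B" using hW part by blast
  have toP: "(adj ends (insert h G))\<^sup>*\<^sup>* x p" if x: "x \<in> A \<union> B" for x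
  proof (cases "x \<in> A")
    case True
    hence "(adj ends {g\<in>G. ends g \<subseteq> A})\<^sup>*\<^sup>* x p" using cA p(2) unfolding connected_on_def by blast
    thus ?thesis by (rule reach_mono[rotated]) blast
  next
    case False
    hence "x \<in> B" using x by blast
    hence "(adj ends {g\<in>G. ends g \<subseteq> B})\<^sup>*\<^sup>* x q" using cB q(2) unfolding connected_on_def by blast
    hence "(adj ends (insert h G))\<^sup>*\<^sup>* x q" by (rule reach_mono[rotated]) blast
    moreover have "adj ends (insert h G) q p" using p q unfolding adj_def by blast
    ultimately show ?thesis by (rule rtranclp.rtrancl_into_rtrancl)
  qed
  have conn: "connected_on ends (A \<union> B) (insert h G)"
    unfolding connected_on_def
  proof (intro conjI ballI)
    show "A \<union> B \<noteq> {}" using p by blast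
    fix x y assume xy: "x \<in> A \<union> B" "y \<in> A \<union> B"
    have "(adj ends (insert h G))\<^sup>*\<^sup>* p y" using toP[OF xy(2)] by (rule reach_sym)
    moreover have "(adj ends (insert h G))\<^sup>*\<^sup>* x p" using toP[OF xy(1)] .
    ultimately have "(adj ends (insert h G))\<^sup>*\<^sup>* x p" "(adj ends (insert h G))\<^sup>*\<^sup>* p y" by blast+
    thus "(adj ends (insert h G))\<^sup>*\<^sup>* x y" by (rule rtranclp_trans)
  qed
  have cl: "\<forall>g\<in>G. ends g \<inter> A \<noteq> {} \<longrightarrow> ends g \<subseteq> A" using part AB by blast
  have "q \<notin> A" using q AB by blast
  hence "acyclic_edges ends (insert h G)" using insert_acyclic[OF acyc wf cl p] q(1) by blast
  thus ?thesis unfolding is_tree_def using edges conn by blast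
qed

lemma tree_swap:
  assumes tree: "is_tree ends W F1" and wf: "\<forall>g\<in>insert f F1. card (ends g) = 1 \<or> card (ends g) = 2"
    and fnot: "f \<notin> F1" and fW: "ends f \<subseteq> W"
    and C: "is_cycle ends C" "f \<in> C" "f' \<in> C" "f' \<noteq> f" "C \<subseteq> insert f F1"
  shows "is_tree ends W (insert f (F1 - {f'}))"
proof -
  have f'F: "f' \<in> F1" using C by blast
  have acyc: "acyclic_edges ends F1" and conn: "connected_on ends W F1" and inW: "\<forall>g\<in>F1. ends g \<subseteq> W"
    using tree unfolding is_tree_def by auto
  have wfF: "\<forall>g\<in>F1. card (ends g) = 1 \<or> card (ends g) = 2" using wf by blast
  obtain p q where pq: "ends f' = {p,q}" "p \<noteq> q" using acyclic_card2[OF acyc f'F] wfF f'F by blast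
  have nr: "\<not> (adj ends (F1 - {f'}))\<^sup>*\<^sup>* p q" using cycle_lemma[OF acyc wfF f'F pq] .
  obtain A B where AB: "A \<union> B = W" "A \<inter> B = {}" "\<forall>g\<in>F1 - {f'}. ends g \<subseteq> A \<or> ends g \<subseteq> B"
     "connected_on ends A {g\<in>F1 - {f'}. ends g \<subseteq> A}" "connected_on ends B {g\<in>F1 - {f'}. ends g \<subseteq> B}"
     "p \<in> A" "q \<in> B"
    using split_tree[OF conn inW f'F pq(1) nr] by blast
  have wfC: "\<forall>g\<in>C. card (ends g) = 1 \<or> card (ends g) = 2" using wf C(5) by blast
  have r: "(adj ends (C - {f'}))\<^sup>*\<^sup>* p q" using cycle_connected[OF C(1) wfC C(3)] pq by simp
  have r2: "(adj ends (insert f (F1 - {f'})))\<^sup>*\<^sup>* p q"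
    using r by (rule reach_mono[rotated]) (use C(5) in blast)
  have cross: "ends f \<inter> A \<noteq> {} \<and> \<not> ends f \<subseteq> A"
  proof (rule ccontr)
    assume nc: "\<not> (ends f \<inter> A \<noteq> {} \<and> \<not> ends f \<subseteq> A)"
    have "\<forall>g\<in>insert f (F1 - {f'}). ends g \<inter> A \<noteq> {} \<longrightarrow> ends g \<subseteq> A"
      using nc AB(2,3) by blast
    hence "q \<in> A" using reach_closed[OF AB(6) _ r2] by blast
    thus False using AB(2,7) by blast
  qed
  then obtain p' q' where p': "p' \<in> ends f" "p' \<in> A" and q': "q' \<in> ends f" "q' \<notin> A" by blast
  have "q' \<in> B" using q' fW AB(1) by blast
  have wf2: "\<forall>g\<in>insert f (F1 - {f'}). card (ends g) = 1 \<or> card (ends g) = 2" using wf by blast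
  have acyc2: "acyclic_edges ends (F1 - {f'})" using acyc by (rule acyclic_subset) blast
  have "is_tree ends (A \<union> B) (insert f (F1 - {f'}))"
    using tree_join[OF AB(2,3,4,5) acyc2 wf2 _ p' q'(1) \<open>q' \<in> B\<close>] fW AB(1) by blast
  thus ?thesis using AB(1) by simp
qed



lemma sf_sym: "spanning_2forest V E ends F V1 V2 \<Longrightarrow> spanning_2forest V E ends F V2 V1"
  unfolding spanning_2forest_def by (metis Int_commute Un_commute)

lemma forest_swap:
  assumes sf: "spanning_2forest V E ends F V1 V2"
    and wfE: "\<forall>g\<in>E. card (ends g) = 1 \<or> card (ends g) = 2"
    and C: "is_cycle ends C" "C \<subseteq> E" "verts_of ends C \<subseteq> V1" "f \<in> C" "f' \<in> C" "f' \<noteq> f"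
       "f \<notin> F" "C - {f} \<subseteq> F"
  shows "spanning_2forest V E ends (insert f (F - {f'})) V1 V2"
proof -
  have FE: "F \<subseteq> E" and U: "V1 \<union> V2 = V" and I: "V1 \<inter> V2 = {}"
    and P: "\<forall>e\<in>F. ends e \<subseteq> V1 \<or> ends e \<subseteq> V2"
    and t1: "is_tree ends V1 {e\<in>F. ends e \<subseteq> V1}" and t2: "is_tree ends V2 {e\<in>F. ends e \<subseteq> V2}"
    using sf unfolding spanning_2forest_def by blast+
  define F1 where "F1 = {e\<in>F. ends e \<subseteq> V1}"
  have endsC: "ends g \<subseteq> V1" if "g \<in> C" for g
    using C(3) that unfolding verts_of_def by blast
  have fE: "f \<in> E" using C by blast
  have f'F1: "f' \<in> F1" using C endsC unfolding F1_def by blast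
  have fF1: "f \<notin> F1" using C(7) unfolding F1_def by blast
  have CF1: "C \<subseteq> insert f F1" using C endsC unfolding F1_def by blast
  have wf: "\<forall>g\<in>insert f F1. card (ends g) = 1 \<or> card (ends g) = 2" using wfE FE fE unfolding F1_def by blast
  have tr: "is_tree ends V1 (insert f (F1 - {f'}))"
    using tree_swap[OF t1[folded F1_def] wf fF1 endsC[OF C(4)] C(1,4,5,6) CF1] .
  have ne: "ends g \<noteq> {}" if "g \<in> E" for g
  proof
    assume "ends g = {}" thus False using wfE that by auto
  qed
  have eq1: "{e\<in>insert f (F - {f'}). ends e \<subseteq> V1} = insert f (F1 - {f'})"
    using endsC[OF C(4)] unfolding F1_def by blast
  have nf: "\<not> ends f \<subseteq> V2" using endsC[OF C(4)] ne[OF fE] I by blast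
  have nf': "\<not> ends f' \<subseteq> V2" using endsC[OF C(5)] ne[of f'] C I by blast
  have eq2: "{e\<in>insert f (F - {f'}). ends e \<subseteq> V2} = {e\<in>F. ends e \<subseteq> V2}"
    using nf nf' by blast
  show ?thesis unfolding spanning_2forest_def eq1 eq2
    using FE fE U I P endsC[OF C(4)] tr t2 by blast
qed

theorem lemma5p5:
  fixes V :: "'v set" and E :: "'e set" and ends :: "'e \<Rightarrow> 'v set"
  assumes graph: "wf_graph V E ends"
    and valid: "valid_edge_partition V E ends T F V1 V2"
    and compat: "compatible_cycle E ends T V1 V2 C"
    and f: "f \<in> C" "f \<notin> F"
  shows "(\<exists>U1 U2. spanning_2forest V E ends (T - {f}) U1 U2)
    \<and> (\<forall>U1 U2. spanning_2forest V E ends (T - {f}) U1 U2 \<longrightarrow>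
          card (crossing_edges ends C U1 U2) \<noteq> 0 \<and> even (card (crossing_edges ends C U1 U2))
        \<and> (\<forall>f'\<in>crossing_edges ends C U1 U2. f' \<noteq> f \<longrightarrow>
             valid_edge_partition V E ends ((T - {f}) \<union> {f'}) ((F - {f'}) \<union> {f}) V1 V2))"
proof -
  have EV: "\<forall>e\<in>E. ends e \<subseteq> V" and wfE: "\<forall>e\<in>E. card (ends e) = 1 \<or> card (ends e) = 2"
    using graph unfolding wf_graph_def by blast+
  have TF: "T \<union> F = E" "T \<inter> F = {}" and TE: "T \<subseteq> E" and treeT: "is_tree ends V T"
    and sfF: "spanning_2forest V E ends F V1 V2"
    using valid unfolding valid_edge_partition_def spanning_tree_def by blast+
  have CE: "C \<subseteq> E" and cycC: "is_cycle ends C" and vC: "verts_of ends C \<subseteq> V1 \<or> verts_of ends C \<subseteq> V2"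
    and c1: "card (C \<inter> T) = 1"
    using compat unfolding compatible_cycle_def by blast+
  have fT: "f \<in> T" using f CE TF by blast
  obtain x where x: "C \<inter> T = {x}" using card1E[OF c1] by blast
  have "f \<in> C \<inter> T" using f fT by simp
  hence "f = x" using x by simp
  hence CT: "C \<inter> T = {f}" using x by simp
  have acycT: "acyclic_edges ends T" and connT: "connected_on ends V T" and inV: "\<forall>g\<in>T. ends g \<subseteq> V"
    using treeT unfolding is_tree_def by blast+
  have wfT: "\<forall>g\<in>T. card (ends g) = 1 \<or> card (ends g) = 2" using wfE TE by blast
  obtain a b where ab: "ends f = {a,b}" "a \<noteq> b" using acyclic_card2[OF acycT fT] wfT fT by blast
  have nr: "\<not> (adj ends (T - {f}))\<^sup>*\<^sup>* a b" using cycle_lemma[OF acycT wfT fT ab] .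
  have acycTf: "acyclic_edges ends (T - {f})" using acycT by (rule acyclic_subset) blast
  have part1: "\<exists>U1 U2. spanning_2forest V E ends (T - {f}) U1 U2"
  proof -
    obtain A B where AB: "A \<union> B = V" "A \<inter> B = {}" "\<forall>g\<in>T - {f}. ends g \<subseteq> A \<or> ends g \<subseteq> B"
      "connected_on ends A {g\<in>T - {f}. ends g \<subseteq> A}" "connected_on ends B {g\<in>T - {f}. ends g \<subseteq> B}"
      using split_tree[OF connT inV fT ab(1) nr] by blast
    have acA: "acyclic_edges ends {g\<in>T - {f}. ends g \<subseteq> A}" by (rule acyclic_subset[OF acycTf]) blast
    have acB: "acyclic_edges ends {g\<in>T - {f}. ends g \<subseteq> B}" by (rule acyclic_subset[OF acycTf]) blast
    have tA: "is_tree ends A {g\<in>T - {f}. ends g \<subseteq> A}"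
      unfolding is_tree_def using AB(4) acA by simp
    have tB: "is_tree ends B {g\<in>T - {f}. ends g \<subseteq> B}"
      unfolding is_tree_def using AB(5) acB by simp
    have sub: "T - {f} \<subseteq> E" using TE by blast
    have "spanning_2forest V E ends (T - {f}) A B"
      unfolding spanning_2forest_def using sub AB(1) AB(2) AB(3) tA tB by (intro conjI)
    thus ?thesis by blast
  qed
  have part2: "card (crossing_edges ends C U1 U2) \<noteq> 0 \<and> even (card (crossing_edges ends C U1 U2))
        \<and> (\<forall>f'\<in>crossing_edges ends C U1 U2. f' \<noteq> f \<longrightarrow>
             valid_edge_partition V E ends ((T - {f}) \<union> {f'}) ((F - {f'}) \<union> {f}) V1 V2)"
    if sf: "spanning_2forest V E ends (T - {f}) U1 U2" for U1 U2
  proof -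
    have U: "U1 \<union> U2 = V" and I: "U1 \<inter> U2 = {}"
      and P: "\<forall>e\<in>T - {f}. ends e \<subseteq> U1 \<or> ends e \<subseteq> U2"
      and t1: "is_tree ends U1 {e\<in>T - {f}. ends e \<subseteq> U1}" and t2: "is_tree ends U2 {e\<in>T - {f}. ends e \<subseteq> U2}"
      using sf unfolding spanning_2forest_def by blast+
    have c1: "connected_on ends U1 {e\<in>T - {f}. ends e \<subseteq> U1}" and c2: "connected_on ends U2 {e\<in>T - {f}. ends e \<subseteq> U2}"
      using t1 t2 unfolding is_tree_def by blast+
    have n1: "\<not> ends f \<subseteq> U1"
    proof
      assume "ends f \<subseteq> U1"
      hence "(adj ends {e\<in>T - {f}. ends e \<subseteq> U1})\<^sup>*\<^sup>* a b" using c1 ab unfolding connected_on_def by blast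
      hence "(adj ends (T - {f}))\<^sup>*\<^sup>* a b" by (rule reach_mono[rotated]) blast
      thus False using nr by simp
    qed
    have n2: "\<not> ends f \<subseteq> U2"
    proof
      assume "ends f \<subseteq> U2"
      hence "(adj ends {e\<in>T - {f}. ends e \<subseteq> U2})\<^sup>*\<^sup>* a b" using c2 ab unfolding connected_on_def by blast
      hence "(adj ends (T - {f}))\<^sup>*\<^sup>* a b" by (rule reach_mono[rotated]) blast
      thus False using nr by simp
    qed
    have fV: "ends f \<subseteq> V" using EV CE f by blast
    have fcross: "f \<in> crossing_edges ends C U1 U2"
      unfolding crossing_edges_def using f(1) n1 n2 fV U by blast
    have crosseq: "crossing_edges ends C U1 U2 = {e\<in>C. ends e \<inter> U1 \<noteq> {} \<and> \<not> ends e \<subseteq> U1}"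
      unfolding crossing_edges_def using CE EV U I by blast
    have finC: "finite C" using cycC unfolding is_cycle_def by simp
    have wfC: "\<forall>e\<in>C. card (ends e) = 1 \<or> card (ends e) = 2" using wfE CE by blast
    have evC: "\<forall>v\<in>U1 \<inter> verts_of ends C. even (degree ends C v)" using cycC unfolding is_cycle_def by simp
    have even: "even (card (crossing_edges ends C U1 U2))"
      unfolding crosseq using parity[OF finC wfC evC] .
    have nz: "card (crossing_edges ends C U1 U2) \<noteq> 0"
    proof -
      have "finite (crossing_edges ends C U1 U2)" using finC unfolding crossing_edges_def by simp
      thus ?thesis using fcross by (metis card_0_eq empty_iff)
    qed
    have swap: "valid_edge_partition V E ends ((T - {f}) \<union> {f'}) ((F - {f'}) \<union> {f}) V1 V2"
      if f': "f' \<in> crossing_edges ends C U1 U2" "f' \<noteq> f" for f'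
    proof -
      have f'C: "f' \<in> C" using f' unfolding crossing_edges_def by blast
      have f'T: "f' \<notin> T" using CT f'C f'(2) by blast
      have f'F: "f' \<in> F" using f'C f'T CE TF by blast
      have eqT: "(T - {f}) \<union> {f'} = insert f' (T - {f})" by blast
      have eqF: "(F - {f'}) \<union> {f} = insert f (F - {f'})" by blast
      obtain p q where pq: "p \<in> ends f'" "p \<in> U1" "q \<in> ends f'" "q \<in> U2"
        using f' unfolding crossing_edges_def by blast
      have f'V: "ends f' \<subseteq> U1 \<union> U2" using EV CE f'C U by blast
      have wf2: "\<forall>g\<in>insert f' (T - {f}). card (ends g) = 1 \<or> card (ends g) = 2"
        using wfE TE CE f'C by blast
      have treeT': "is_tree ends (U1 \<union> U2) (insert f' (T - {f}))"
        using tree_join[OF I P c1 c2 acycTf wf2 f'V pq] .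
      have spT: "spanning_tree V E ends (insert f' (T - {f}))"
        unfolding spanning_tree_def using treeT' U TE CE f'C by (metis insert_subset Diff_subset subset_trans)
      have CmF: "C - {f} \<subseteq> F" using CT CE TF by blast
      have spF: "spanning_2forest V E ends (insert f (F - {f'})) V1 V2"
      proof (cases "verts_of ends C \<subseteq> V1")
        case True
        show ?thesis using forest_swap[OF sfF wfE cycC CE True f(1) f'C f'(2) f(2) CmF] .
      next
        case False
        hence v2: "verts_of ends C \<subseteq> V2" using vC by blast
        show ?thesis using sf_sym[OF forest_swap[OF sf_sym[OF sfF] wfE cycC CE v2 f(1) f'C f'(2) f(2) CmF]] .
      qed
      have "insert f' (T - {f}) \<union> insert f (F - {f'}) = T \<union> F" using fT f'F by blast
      hence un: "insert f' (T - {f}) \<union> insert f (F - {f'}) = E" using TF(1) by simp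
      have dj: "x \<notin> F" if "x \<in> T" for x using TF(2) that by blast
      have int: "insert f' (T - {f}) \<inter> insert f (F - {f'}) = {}" using dj f(2) f'T f'(2) by blast
      show ?thesis unfolding eqT eqF valid_edge_partition_def using un int spT spF by (intro conjI)
    qed
    show ?thesis using nz even swap by blast
  qed
  show ?thesis using part1 part2 by blast
qed

end
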